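(* The map from $\mathcal L_n$ to $\mathcal T_n$ which orders the children of each vertex according to their labels (increasingly) and then removes all labels is a bijection.
   Context: A rooted tree with vertex set $\{0,\dots,n\}$ is naturally labeled if labels increase towards the root and, for each $i$, all children of $i$ have labels smaller than all children of $i+1$; $\mathcal L_n$ is the set of such trees. An ordered rooted tree is an unlabeled rooted tree together with a linear order on the children of each vertex; $\mathcal T_n$ is the set of ordered rooted trees with $n+1$ vertices. *)

theory Defs
  imports Main
begin

text \<open>Equality of terms is exactly isomorphism of ordered
rooted trees, so this type represents unlabeled ordered rooted trees.\<close>
datatype otree = Node "otree list"

fun num_vertices :: "otree \<Rightarrow> nat" where
  "num_vertices (Node ts) = Suc (sum_list (map num_vertices ts))"

definition ordered_trees :: "nat \<Rightarrow> otree set" where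
  "ordered_trees n = {t. num_vertices t = Suc n}"

text \<open>A rooted tree on vertex set {0..n} whose labels increase towards the root
has root n, and is encoded by its parent list ps of length n:
ps ! i is the parent of vertex i (i < n), and ps ! i > i.
Natural labeling: children of i have smaller labels than children of j
whenever i < j.\<close>
definition naturally_labeled_trees :: "nat \<Rightarrow> nat list set" where
  "naturally_labeled_trees n =
     {ps. length ps = n
        \<and> (\<forall>i<n. i < ps ! i \<and> ps ! i \<le> n)
        \<and> (\<forall>a<n. \<forall>b<n. ps ! a < ps ! b \<longrightarrow> a < b)}"

function subtree_of :: "nat list \<Rightarrow> nat \<Rightarrow> otree" where
  "subtree_of ps v = Node (map (subtree_of ps) [c \<leftarrow> [0..<v]. ps ! c = v])"
  by auto
termination by (relation "measure snd") auto

definition forget_labels :: "nat \<Rightarrow> nat list \<Rightarrow> otree" where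
  "forget_labels n ps = subtree_of ps n"

end

theory Submission
  imports Defs
begin

declare subtree_of.simps[simp del]

function bfs :: "otree list \<Rightarrow> nat list" where
  "bfs [] = []"
| "bfs (Node cs # q) = length cs # bfs (q @ rev cs)"
  by pat_completeness auto
termination
  by (relation "measure (\<lambda>q. sum_list (map num_vertices q))") (auto simp: rev_map[symmetric])

lemma bfs_inj: "length q1 = length q2 \<Longrightarrow> bfs q1 = bfs q2 \<Longrightarrow> q1 = q2"
proof (induction q1 arbitrary: q2 rule: bfs.induct)
  case 1
  then show ?case by simp
next
  case (2 cs q)
  then obtain cs' q' where q2: "q2 = Node cs' # q'"
    by (metis length_Suc_conv otree.exhaust)
  with 2 have l: "length cs = length cs'" and b: "bfs (q @ rev cs) = bfs (q' @ rev cs')"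
    and lq: "length q = length q'" by auto
  have "q @ rev cs = q' @ rev cs'" using 2(1)[OF _ b] l lq by simp
  with lq show ?case using q2 by simp
qed

lemma bfs_length: "length (bfs q) = sum_list (map num_vertices q)"
  by (induction q rule: bfs.induct) (auto simp: rev_map[symmetric])

lemma bfs_sum: "sum_list (bfs q) + length q = sum_list (map num_vertices q)"
  by (induction q rule: bfs.induct) (auto simp: rev_map[symmetric])

lemma bfs_ballot: "k < length (bfs q) \<Longrightarrow> k < sum_list (take k (bfs q)) + length q"
proof (induction q arbitrary: k rule: bfs.induct)
  case 1
  then show ?case by simp
next
  case (2 cs q)
  show ?case
  proof (cases k)
    case 0 then show ?thesis by simp
  next
    case (Suc j)
    with 2 have "j < sum_list (take j (bfs (q @ rev cs))) + length (q @ rev cs)" by auto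
    then show ?thesis using Suc by simp
  qed
qed

definition mm :: "nat list \<Rightarrow> nat \<Rightarrow> nat" where
  "mm ps v = card {c. c < length ps \<and> ps ! c \<le> v}"

definition dm :: "nat list \<Rightarrow> nat \<Rightarrow> nat" where
  "dm ps u = mm ps u - mm ps (u - 1)"

lemma downclosed:
  fixes S :: "nat set"
  assumes "S \<subseteq> {..<n}" "\<And>a b. b \<in> S \<Longrightarrow> a \<le> b \<Longrightarrow> a \<in> S"
  shows "S = {..<card S}"
proof (cases "S = {}")
  case True then show ?thesis by simp
next
  case False
  have fin: "finite S" using assms(1) finite_subset by blast
  have "Max S \<in> S" using Max_in fin False by blast
  then have "\<And>x. x \<le> Max S \<Longrightarrow> x \<in> S" using assms(2) by blast
  then have "S = {..Max S}"
    using fin by (auto intro: Max_ge)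
  then show ?thesis by (metis card_atMost lessThan_Suc_atMost)
qed

lemma NL_props:
  assumes "ps \<in> naturally_labeled_trees n"
  shows "length ps = n" "\<And>i. i < n \<Longrightarrow> i < ps ! i \<and> ps ! i \<le> n"
    "\<And>a b. a < n \<Longrightarrow> b < n \<Longrightarrow> a \<le> b \<Longrightarrow> ps ! a \<le> ps ! b"
proof -
  show "length ps = n" "\<And>i. i < n \<Longrightarrow> i < ps ! i \<and> ps ! i \<le> n"
    using assms unfolding naturally_labeled_trees_def by auto
  have h: "\<forall>a<n. \<forall>b<n. ps ! a < ps ! b \<longrightarrow> a < b"
    using assms unfolding naturally_labeled_trees_def by simp
  fix a b assume ab: "a < n" "b < n" "a \<le> b"
  show "ps ! a \<le> ps ! b"
  proof (rule ccontr)
    assume "\<not> ps ! a \<le> ps ! b"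
    then have "ps ! b < ps ! a" by simp
    with h ab have "b < a" by blast
    with ab show False by simp
  qed
qed

lemma K:
  assumes "ps \<in> naturally_labeled_trees n" "c < n"
  shows "ps ! c \<le> v \<longleftrightarrow> c < mm ps v"
proof -
  note P = NL_props[OF assms(1)]
  let ?S = "{c. c < length ps \<and> ps ! c \<le> v}"
  have "?S = {..<card ?S}"
  proof (rule downclosed[where n = n])
    show "?S \<subseteq> {..<n}" using P(1) by auto
  next
    fix a b assume "b \<in> ?S" "a \<le> b"
    then have "a < n" "b < n" "ps ! b \<le> v" using P(1) by auto
    with P(3)[of a b] \<open>a \<le> b\<close> show "a \<in> ?S" using P(1) by simp
  qed
  then have "?S = {..<mm ps v}" unfolding mm_def by simp
  then show ?thesis using assms(2) P(1) by (metis (no_types, lifting) lessThan_iff mem_Collect_eq)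
qed

lemma mm_le_n:
  assumes "ps \<in> naturally_labeled_trees n"
  shows "mm ps v \<le> n"
proof -
  have "{c. c < length ps \<and> ps ! c \<le> v} \<subseteq> {..<n}" using NL_props(1)[OF assms] by auto
  then show ?thesis unfolding mm_def by (metis card_lessThan card_mono finite_lessThan)
qed

lemma mm_n:
  assumes "ps \<in> naturally_labeled_trees n" "n \<le> v"
  shows "mm ps v = n"
proof -
  have "{c. c < length ps \<and> ps ! c \<le> v} = {..<n}" using NL_props[OF assms(1)] assms(2)
    by fastforce
  then show ?thesis unfolding mm_def by simp
qed

lemma mm_le_v:
  assumes "ps \<in> naturally_labeled_trees n" "v < n"
  shows "mm ps v \<le> v"
  using K[OF assms, of v] NL_props(2)[OF assms(1) assms(2)] by simp

lemma mm_0: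
  assumes "ps \<in> naturally_labeled_trees n"
  shows "mm ps 0 = 0"
proof -
  have "{c. c < length ps \<and> ps ! c \<le> 0} = {}" using NL_props[OF assms(1)] by fastforce
  then show ?thesis unfolding mm_def by simp
qed

lemma mm_mono: "v \<le> w \<Longrightarrow> mm ps v \<le> mm ps w"
  unfolding mm_def by (rule card_mono) auto

lemma children:
  assumes "ps \<in> naturally_labeled_trees n" "Suc w \<le> n"
  shows "[c \<leftarrow> [0..<Suc w]. ps ! c = Suc w] = [mm ps w..<mm ps (Suc w)]"
proof (rule sorted_distinct_set_unique)
  note P = NL_props[OF assms(1)]
  have a: "mm ps (Suc w) \<le> Suc w"
    using mm_le_v[OF assms(1)] mm_n[OF assms(1)] assms(2)
    by (cases "Suc w < n") auto
  show "set [c \<leftarrow> [0..<Suc w]. ps ! c = Suc w] = set [mm ps w..<mm ps (Suc w)]"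
  proof (rule set_eqI, rule iffI)
    fix c assume "c \<in> set [c \<leftarrow> [0..<Suc w]. ps ! c = Suc w]"
    then have c: "c < Suc w" "ps ! c = Suc w" by (auto simp del: upt_Suc)
    then have "c < n" using assms(2) by simp
    then show "c \<in> set [mm ps w..<mm ps (Suc w)]"
      using K[OF assms(1), of c w] K[OF assms(1), of c "Suc w"] c by simp
  next
    fix c assume "c \<in> set [mm ps w..<mm ps (Suc w)]"
    then have c: "mm ps w \<le> c" "c < mm ps (Suc w)" by auto
    then have "c < Suc w" using a by simp
    then have "c < n" using assms(2) by simp
    then show "c \<in> set [c \<leftarrow> [0..<Suc w]. ps ! c = Suc w]"
      using K[OF assms(1), of c w] K[OF assms(1), of c "Suc w"] c \<open>c < Suc w\<close> by (simp del: upt_Suc)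
  qed
next
  show "sorted [c \<leftarrow> [0..<Suc w]. ps ! c = Suc w]"
    by (metis sorted_upt sorted_wrt_filter)
qed (simp_all del: upt_Suc)


lemma upt_split: "i \<le> j \<Longrightarrow> j \<le> k \<Longrightarrow> [i..<j] @ [j..<k] = [i..<k]"
  by (metis le_add_diff_inverse upt_add_eq_append)

lemma lemmaA:
  assumes "ps \<in> naturally_labeled_trees n" "v \<le> n"
  shows "bfs (map (subtree_of ps) (rev [mm ps v..<Suc v])) = rev (map (dm ps) [0..<Suc v])"
  using assms(2)
proof (induction v)
  case 0
  have "subtree_of ps 0 = Node []" by (subst subtree_of.simps) simp
  then show ?case using mm_0[OF assms(1)] by (simp add: dm_def)
next
  case (Suc w)
  have a: "mm ps (Suc w) \<le> Suc w" using mm_le_v[OF assms(1)] mm_n[OF assms(1)] Suc.prems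
    by (cases "Suc w < n") auto
  have b: "mm ps w \<le> mm ps (Suc w)" by (rule mm_mono) simp
  have st: "subtree_of ps (Suc w) = Node (map (subtree_of ps) [mm ps w..<mm ps (Suc w)])"
    by (subst subtree_of.simps) (simp only: children[OF assms(1) Suc.prems])
  have q: "rev [mm ps (Suc w)..<Suc (Suc w)] = Suc w # rev [mm ps (Suc w)..<Suc w]"
    using a by simp
  have r: "map (subtree_of ps) (rev [mm ps (Suc w)..<Suc w]) @ rev (map (subtree_of ps) [mm ps w..<mm ps (Suc w)])
      = map (subtree_of ps) (rev [mm ps w..<Suc w])"
    using upt_split[OF b a] by (metis map_append rev_append rev_map)
  have "bfs (map (subtree_of ps) (rev [mm ps (Suc w)..<Suc (Suc w)]))
      = dm ps (Suc w) # bfs (map (subtree_of ps) (rev [mm ps w..<Suc w]))"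
    unfolding q using st r by (simp del: upt_Suc add: dm_def)
  also have "\<dots> = dm ps (Suc w) # rev (map (dm ps) [0..<Suc w])"
    using Suc.IH Suc.prems by (simp del: upt_Suc)
  also have "\<dots> = rev (map (dm ps) [0..<Suc (Suc w)])"
    by (simp only: upt_Suc_append[of 0 "Suc w"] le0 map_append rev_append) simp
  finally show ?case .
qed


lemma forget_bfs:
  assumes "ps \<in> naturally_labeled_trees n"
  shows "bfs [forget_labels n ps] = rev (map (dm ps) [0..<Suc n])"
  using lemmaA[OF assms order_refl] mm_n[OF assms order_refl]
  by (simp add: forget_labels_def)

lemma forget_in:
  assumes "ps \<in> naturally_labeled_trees n"
  shows "forget_labels n ps \<in> ordered_trees n"
proof -
  have "length (bfs [forget_labels n ps]) = Suc n" using forget_bfs[OF assms] by simp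
  then show ?thesis unfolding ordered_trees_def by (simp add: bfs_length)
qed

lemma mm_eq:
  assumes "ps1 \<in> naturally_labeled_trees n" "ps2 \<in> naturally_labeled_trees n"
    and "\<And>u. u \<le> n \<Longrightarrow> dm ps1 u = dm ps2 u" "v \<le> n"
  shows "mm ps1 v = mm ps2 v"
  using assms(4)
proof (induction v)
  case 0
  then show ?case using mm_0[OF assms(1)] mm_0[OF assms(2)] by simp
next
  case (Suc w)
  have "mm ps1 w \<le> mm ps1 (Suc w)" "mm ps2 w \<le> mm ps2 (Suc w)" by (auto intro: mm_mono)
  moreover have "dm ps1 (Suc w) = dm ps2 (Suc w)" using assms(3) Suc.prems by simp
  ultimately show ?case using Suc by (simp add: dm_def)
qed

lemma inj_forget: "inj_on (forget_labels n) (naturally_labeled_trees n)"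
proof (rule inj_onI)
  fix ps1 ps2 assume A: "ps1 \<in> naturally_labeled_trees n" "ps2 \<in> naturally_labeled_trees n"
    and E: "forget_labels n ps1 = forget_labels n ps2"
  have "map (dm ps1) [0..<Suc n] = map (dm ps2) [0..<Suc n]"
    using forget_bfs[OF A(1)] forget_bfs[OF A(2)] E by simp
  then have "\<And>u. u \<le> n \<Longrightarrow> dm ps1 u = dm ps2 u" by (simp add: map_eq_conv del: upt_Suc)
  then have M: "\<And>v. v \<le> n \<Longrightarrow> mm ps1 v = mm ps2 v" using mm_eq[OF A] by blast
  note P1 = NL_props[OF A(1)] and P2 = NL_props[OF A(2)]
  show "ps1 = ps2"
  proof (rule nth_equalityI)
    show "length ps1 = length ps2" using P1(1) P2(1) by simp
  next
    fix c assume "c < length ps1"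
    then have c: "c < n" using P1(1) by simp
    have "ps2 ! c \<le> ps1 ! c"
      using K[OF A(1) c, of "ps1 ! c"] K[OF A(2) c, of "ps1 ! c"] M[of "ps1 ! c"] P1(2)[OF c] by simp
    moreover have "ps1 ! c \<le> ps2 ! c"
      using K[OF A(1) c, of "ps2 ! c"] K[OF A(2) c, of "ps2 ! c"] M[of "ps2 ! c"] P2(2)[OF c] by simp
    ultimately show "ps1 ! c = ps2 ! c" by simp
  qed
qed

lemma sum_take_mono: "k \<le> k' \<Longrightarrow> sum_list (take k (xs::nat list)) \<le> sum_list (take k' xs)"
  by (metis le_add1 le_add_diff_inverse sum_list_append take_add)

lemma sum_take_drop: "sum_list (take k (xs::nat list)) + sum_list (drop k xs) = sum_list xs"
  by (metis append_take_drop_id sum_list_append)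

lemma surj_forget:
  assumes t: "t \<in> ordered_trees n"
  shows "t \<in> forget_labels n ` naturally_labeled_trees n"
proof -
  define ds where "ds = bfs [t]"
  define rds where "rds = rev ds"
  define M where "M v = sum_list (take (Suc v) rds)" for v
  define p where "p c = (LEAST v. c < M v)" for c
  define ps where "ps = map p [0..<n]"
  have nv: "num_vertices t = Suc n" using t unfolding ordered_trees_def by simp
  have len: "length ds = Suc n" unfolding ds_def using nv by (simp add: bfs_length)
  have sum: "sum_list ds = n" unfolding ds_def using bfs_sum[of "[t]"] nv by simp
  have lenr: "length rds = Suc n" using len unfolding rds_def by simp
  have Mmono: "\<And>v w. v \<le> w \<Longrightarrow> M v \<le> M w" unfolding M_def by (rule sum_take_mono) simp
  have Mn: "M n = n" unfolding M_def using lenr sum unfolding rds_def by simp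
  have Mv: "M v \<le> v" if "v < n" for v
  proof -
    define k where "k = n - v"
    have "k < length (bfs [t])" using len that unfolding k_def ds_def by simp
    from bfs_ballot[OF this] have "k \<le> sum_list (take k ds)" unfolding ds_def by simp
    moreover have "sum_list (drop k ds) = M v"
    proof -
      have "sum_list (drop k ds) = sum_list (rev (drop k ds))" by simp
      also have "\<dots> = sum_list (take (Suc v) rds)" unfolding rds_def rev_drop len k_def
        using that by (simp add: Suc_diff_le)
      finally show ?thesis unfolding M_def .
    qed
    ultimately show ?thesis using sum_take_drop[of k ds] sum unfolding k_def using that by linarith
  qed
  have pI: "c < M (p c)" and pL: "p c \<le> n" if "c < n" for c
  proof -
    have "c < M n" using Mn that by simp
    then show "c < M (p c)" "p c \<le> n" unfolding p_def by (auto intro: LeastI Least_le)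
  qed
  have pchar: "p c \<le> v \<longleftrightarrow> c < M v" if "c < n" for c v
  proof
    assume "p c \<le> v" then show "c < M v" using pI[OF that] Mmono[of "p c" v] by simp
  next
    assume "c < M v" then show "p c \<le> v" unfolding p_def by (rule Least_le)
  qed
  have psL: "ps \<in> naturally_labeled_trees n"
    unfolding naturally_labeled_trees_def
  proof (intro CollectI conjI allI impI)
    show "length ps = n" unfolding ps_def by simp
  next
    fix i assume i: "i < n"
    show "ps ! i \<le> n" using pL[OF i] i unfolding ps_def by simp
    show "i < ps ! i"
    proof (rule ccontr)
      assume "\<not> i < ps ! i"
      then have "p i \<le> i" using i unfolding ps_def by simp
      then have "i < M i" using pchar[OF i] by simp
      with Mv[OF i] show False by simp
    qed
  next
    fix a b assume a: "a < n" and b: "b < n" and lt: "ps ! a < ps ! b"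
    show "a < b"
    proof (rule ccontr)
      assume "\<not> a < b"
      then have "b < M (p a)" using pI[OF a] by simp
      then have "p b \<le> p a" using pchar[OF b] by simp
      with lt a b show False unfolding ps_def by simp
    qed
  qed
  have mmM: "mm ps v = M v" if "v \<le> n" for v
  proof -
    have "M v \<le> n" using Mmono[OF that] Mn by simp
    have "{c. c < length ps \<and> ps ! c \<le> v} = {..<M v}"
      using pchar \<open>M v \<le> n\<close> unfolding ps_def by auto
    then show ?thesis unfolding mm_def by simp
  qed
  have r0: "rds ! 0 = 0"
  proof -
    have "M 0 = 0" using Mv[of 0] Mn by (cases "n = 0") auto
    moreover have "M 0 = rds ! 0" unfolding M_def using lenr by (cases rds) auto
    ultimately show ?thesis by simp
  qed
  have dmr: "dm ps u = rds ! u" if "u \<le> n" for u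
  proof (cases u)
    case 0 then show ?thesis using r0 by (simp add: dm_def)
  next
    case (Suc w)
    have "M u = M w + rds ! u" unfolding M_def Suc using lenr that Suc
      by (simp add: take_Suc_conv_app_nth)
    then show ?thesis using mmM[OF that] mmM[of w] that Suc by (simp add: dm_def)
  qed
  have "bfs [forget_labels n ps] = rev (map (dm ps) [0..<Suc n])" by (rule forget_bfs[OF psL])
  also have "\<dots> = rev (map ((!) rds) [0..<length rds])" using dmr lenr
    by (simp add: map_eq_conv del: upt_Suc)
  also have "\<dots> = ds" unfolding map_nth rds_def by simp
  finally have "[forget_labels n ps] = [t]" using bfs_inj[of "[forget_labels n ps]" "[t]"]
    unfolding ds_def by simp
  then show ?thesis using psL by auto
qed

theorem corollary3p8:
  shows "bij_betw (forget_labels n) (naturally_labeled_trees n) (ordered_trees n)"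
  unfolding bij_betw_def
  using inj_forget forget_in surj_forget by blast

end
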